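(* Assume the standing hypotheses on $H$ (Conditions A, B, C, in particular $\Lambda^{\sup}<\infty$) and suppose $k>1$ (equivalently $\gamma>2$). Let $0<T<\infty$, let $h:\mathbb{R}^n\to\mathbb{R}$ be continuous with $\sup_{\mathbb{R}^n}h<\infty$, let $\chi:(0,T)\to\mathbb{R}$ be bounded and continuous, let $\sigma\ge 0$, and for some $m\in\mathbb{R}$ let $Z:[m,\infty)\to[0,\infty)$ be non-increasing and continuous. Let $u$ be upper semicontinuous on $\mathbb{R}^n\times[0,T)$ with $\inf u>m$, be a viscosity sub-solution of $\mathcal{P}_\sigma(t,u,u_t,Du,D^2u)\ge 0$ in $\mathbb{R}^n_T$, and satisfy $u(x,0)\le h(x)$ for all $x\in\mathbb{R}^n$. Fix $z\in\mathbb{R}^n$ and suppose $\sup_{B^R_T}u=o(R^{\beta})$ as $R\to\infty$. (a) If $0\le\sigma\le\gamma/2$ and $\beta=\gamma^*$, then for all $(x,t)\in\mathbb{R}^n_T$: $u(x,t)\le \sup_{\mathbb{R}^n}h+t\sup_{(0,T)}|\chi|$ when $\sigma=0$, and $u(x,t)\le\sup_{\mathbb{R}^n}h$ when $0<\sigma\le\gamma/2$. (b) If $\sigma>\gamma/2$ and $\beta=\sigma^*$, then $u(x,t)\le\sup_{\mathbb{R}^n}h$ for all $(x,t)\in\mathbb{R}^n_T$.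
   Context: Let $n\ge2$, let $S^{n\times n}$ denote the real symmetric $n\times n$ matrices with the usual partial order, $I$ the identity, $O$ the zero matrix, and for a unit vector $e$ let $(e\otimes e)_{ij}=e_ie_j$ (more generally $(p\otimes q)_{ij}=p_iq_j$). $H:\mathbb{R}^n\times S^{n\times n}\to\mathbb{R}$ is continuous and satisfies: Condition A: $H(q,X)\le H(q,Y)$ whenever $X\le Y$, and $H(q,O)=0$ for all $q$. Condition B: there is $k_1\ge0$ with $H(\theta q,X)=|\theta|^{k_1}H(q,X)$ for all $\theta\in\mathbb{R}$ and $H(q,\theta X)=\theta H(q,X)$ for all $\theta>0$. Condition C: $\max_{|e|=1}H(e,-I)<0<\min_{|e|=1}H(e,I)$ and $\Lambda^{\sup}:=\sup_{\lambda\in\mathbb{R}}\max_{|e|=1}H(e,\lambda e\otimes e+I)<\infty$. Set $k=k_1+1$, $\gamma=k+1$, and for $k>1$, $\gamma^*=\gamma/(\gamma-2)$; for $\sigma>1$, $\sigma^*=\sigma/(\sigma-1)$. $\mathbb{R}^n_T=\mathbb{R}^n\times(0,T)$, and for fixed $z$, $B^R_T=\{(x,t):|x-z|\le R,\ 0<t<T\}$. The operator is $\mathcal{P}_\sigma(t,u,u_t,Du,D^2u)=H(Du,D^2u+Z(u)Du\otimes Du)+\chi(t)|Du|^\sigma-u_t$, with the convention $|q|^0=1$. Solutions, sub-solutions and super-solutions are in the viscosity sense. *)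

theory Defs
  imports "HOL-Analysis.Analysis" "HOL-Library.Landau_Symbols"
begin

definition tensor :: "real^'n \<Rightarrow> real^'n \<Rightarrow> real^'n^'n" where
  "tensor p q = (\<chi> i j. p $ i * q $ j)"

definition symm :: "real^'n^'n \<Rightarrow> bool" where
  "symm X \<longleftrightarrow> transpose X = X"

definition mat_le :: "real^'n^'n \<Rightarrow> real^'n^'n \<Rightarrow> bool" where
  "mat_le X Y \<longleftrightarrow> (\<forall>v. 0 \<le> v \<bullet> ((Y - X) *v v))"

text \<open>|q|^s with the convention |q|^0 = 1.\<close>
definition pw :: "real \<Rightarrow> real \<Rightarrow> real" where
  "pw r s = (if s = 0 then 1 else r powr s)"

definition usc_on :: "'a::topological_space set \<Rightarrow> ('a \<Rightarrow> real) \<Rightarrow> bool" where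
  "usc_on D f \<longleftrightarrow> (\<forall>p\<in>D. \<forall>a. f p < a \<longrightarrow> (\<forall>\<^sub>F q in at p within D. f q < a))"

text \<open>Standing conditions A, B, C on H (H is only relevant on R^n x S^{n x n}).\<close>
definition cond_H :: "(real^'n \<Rightarrow> real^'n^'n \<Rightarrow> real) \<Rightarrow> real \<Rightarrow> bool" where
  "cond_H H k1 \<longleftrightarrow>
     continuous_on (UNIV \<times> {X. symm X}) (\<lambda>p. H (fst p) (snd p)) \<and>
     \<comment> \<open>Condition A\<close>
     (\<forall>q X Y. symm X \<and> symm Y \<and> mat_le X Y \<longrightarrow> H q X \<le> H q Y) \<and>
     (\<forall>q. H q 0 = 0) \<and>
     \<comment> \<open>Condition B\<close>
     0 \<le> k1 \<and>
     (\<forall>\<theta> q X. symm X \<longrightarrow> H (\<theta> *\<^sub>R q) X = pw \<bar>\<theta>\<bar> k1 * H q X) \<and>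
     (\<forall>\<theta> q X. symm X \<and> 0 < \<theta> \<longrightarrow> H q (\<theta> *\<^sub>R X) = \<theta> * H q X) \<and>
     \<comment> \<open>Condition C\<close>
     (SUP e\<in>sphere 0 1. H e (- mat 1)) < 0 \<and>
     0 < (INF e\<in>sphere 0 1. H e (mat 1)) \<and>
     bdd_above {H e (lam *\<^sub>R tensor e e + mat 1) | lam e. norm e = 1}"

definition C21 :: "(real^'n \<Rightarrow> real \<Rightarrow> real) \<Rightarrow> (real^'n \<Rightarrow> real \<Rightarrow> real^'n)
    \<Rightarrow> (real^'n \<Rightarrow> real \<Rightarrow> real^'n^'n) \<Rightarrow> (real^'n \<Rightarrow> real \<Rightarrow> real) \<Rightarrow> bool" where
  "C21 \<phi> D\<phi> D2\<phi> \<phi>t \<longleftrightarrow>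
     (\<forall>x t. ((\<lambda>y. \<phi> y t) has_derivative (\<lambda>h. D\<phi> x t \<bullet> h)) (at x)) \<and>
     (\<forall>x t. ((\<lambda>y. D\<phi> y t) has_derivative (\<lambda>h. D2\<phi> x t *v h)) (at x)) \<and>
     (\<forall>x t. ((\<lambda>s. \<phi> x s) has_real_derivative \<phi>t x t) (at t)) \<and>
     continuous_on UNIV (\<lambda>p. D\<phi> (fst p) (snd p)) \<and>
     continuous_on UNIV (\<lambda>p. D2\<phi> (fst p) (snd p)) \<and>
     continuous_on UNIV (\<lambda>p. \<phi>t (fst p) (snd p))"

definition P_op :: "(real^'n \<Rightarrow> real^'n^'n \<Rightarrow> real) \<Rightarrow> (real \<Rightarrow> real) \<Rightarrow> (real \<Rightarrow> real)
    \<Rightarrow> real \<Rightarrow> real \<Rightarrow> real \<Rightarrow> real \<Rightarrow> real^'n \<Rightarrow> real^'n^'n \<Rightarrow> real" where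
  "P_op H Z chi \<sigma> t r rt q X = H q (X + Z r *\<^sub>R tensor q q) + chi t * pw (norm q) \<sigma> - rt"

definition visc_sub :: "(real^'n \<Rightarrow> real^'n^'n \<Rightarrow> real) \<Rightarrow> (real \<Rightarrow> real) \<Rightarrow> (real \<Rightarrow> real)
    \<Rightarrow> real \<Rightarrow> real \<Rightarrow> (real^'n \<Rightarrow> real \<Rightarrow> real) \<Rightarrow> bool" where
  "visc_sub H Z chi \<sigma> T u \<longleftrightarrow>
     usc_on (UNIV \<times> {0<..<T}) (\<lambda>p. u (fst p) (snd p)) \<and>
     (\<forall>\<phi> D\<phi> D2\<phi> \<phi>t x0 t0.
        C21 \<phi> D\<phi> D2\<phi> \<phi>t \<and> t0 \<in> {0<..<T} \<and>
        (\<exists>r>0. \<forall>y s. s \<in> {0<..<T} \<and> dist (y, s) (x0, t0) < r \<longrightarrow>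
                   u y s - \<phi> y s \<le> u x0 t0 - \<phi> x0 t0)
        \<longrightarrow> 0 \<le> P_op H Z chi \<sigma> t0 (u x0 t0) (\<phi>t x0 t0) (D\<phi> x0 t0) (D2\<phi> x0 t0))"

end

theory Submission
  imports Defs
begin


lemma tensor_mult: "tensor v w *v h = (w \<bullet> h) *\<^sub>R v"
  by (simp add: tensor_def vec_eq_iff matrix_vector_mult_def inner_vec_def sum_distrib_left mult.commute mult.left_commute)

lemma transpose_add': "transpose (A + B) = transpose A + (transpose B :: real^'n^'m)"
  by (simp add: transpose_def vec_eq_iff)

lemma symm_add: "symm A \<Longrightarrow> symm B \<Longrightarrow> symm (A + B)"
  by (simp add: symm_def transpose_add')

lemma symm_scale: "symm A \<Longrightarrow> symm (c *\<^sub>R A)"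
  by (simp add: symm_def transpose_scalar)

lemma symm_mat1: "symm (mat 1)"
  by (simp add: symm_def transpose_mat)

lemma symm_tensor: "symm (tensor v v)"
  by (simp add: symm_def tensor_def transpose_def vec_eq_iff mult.commute)

lemma tensor_scale: "tensor (c *\<^sub>R v) (c *\<^sub>R v) = (c^2) *\<^sub>R tensor v v"
  by (simp add: tensor_def vec_eq_iff power2_eq_square)

lemma usc_max:
  assumes K: "compact K" "K \<noteq> {}" "K \<subseteq> D" and f: "usc_on D f"
  shows "\<exists>p\<in>K. \<forall>q\<in>K. f q \<le> f p"
proof (rule ccontr)
  assume "\<not> ?thesis"
  hence "\<forall>p\<in>K. \<exists>q. q \<in> K \<and> f p < f q" by (auto simp: not_le)
  then obtain g where g: "\<And>p. p \<in> K \<Longrightarrow> g p \<in> K \<and> f p < f (g p)" by metis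
  have "\<exists>S. open S \<and> p \<in> S \<and> (\<forall>x\<in>S \<inter> D. f x < f (g p))" if p: "p \<in> K" for p
  proof -
    have "\<forall>\<^sub>F q in at p within D. f q < f (g p)" using f g[OF p] p K(3) unfolding usc_on_def by blast
    then obtain S where S: "open S" "p \<in> S" "\<And>x. x \<in> S \<Longrightarrow> x \<in> D \<Longrightarrow> x \<noteq> p \<Longrightarrow> f x < f (g p)"
      unfolding eventually_at_topological by blast
    show ?thesis using S g[OF p] by (intro exI[of _ S]) auto
  qed
  then obtain N where N: "\<And>p. p \<in> K \<Longrightarrow> open (N p) \<and> p \<in> N p \<and> (\<forall>x\<in>N p \<inter> D. f x < f (g p))" by metis
  have "K \<subseteq> \<Union>(N ` K)" using N by blast
  then obtain K' where K': "K' \<subseteq> K" "finite K'" "K \<subseteq> \<Union>(N ` K')"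
    using compactE_image[OF K(1), of K N] N by metis
  have "K' \<noteq> {}" using K' K(2) by auto
  define mx where "mx = Max ((\<lambda>p. f (g p)) ` K')"
  have mx_in: "mx \<in> (\<lambda>p. f (g p)) ` K'" unfolding mx_def using K'(2) \<open>K' \<noteq> {}\<close> by (intro Max_in) auto
  have mx_ge: "f (g p) \<le> mx" if "p \<in> K'" for p unfolding mx_def using K'(2) that by (intro Max_ge) auto
  obtain p0 where p0: "p0 \<in> K'" "mx = f (g p0)" using mx_in by auto
  have "g p0 \<in> K" using g p0(1) K'(1) by blast
  then obtain p1 where p1: "p1 \<in> K'" "g p0 \<in> N p1" using K'(3) by blast
  have "f (g p0) < f (g p1)" using N[of p1] p1 K'(1) \<open>g p0 \<in> K\<close> K(3) by blast
  with mx_ge[OF p1(1)] p0(2) show False by simp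
qed

lemma usc_diff:
  assumes "usc_on D f" "continuous_on D g"
  shows "usc_on D (\<lambda>p. f p - g p)"
  unfolding usc_on_def
proof (intro ballI allI impI)
  fix p a assume p: "p \<in> D" and lt: "f p - g p < a"
  define e where "e = a - (f p - g p)"
  have e: "e > 0" using lt by (simp add: e_def)
  have 1: "\<forall>\<^sub>F q in at p within D. f q < f p + e/2" using assms(1) p e unfolding usc_on_def by simp
  have "(g \<longlongrightarrow> g p) (at p within D)" using assms(2) p by (simp add: continuous_on_def)
  hence 2: "\<forall>\<^sub>F q in at p within D. dist (g q) (g p) < e/2" using e unfolding tendsto_iff by (metis half_gt_zero)
  show "\<forall>\<^sub>F q in at p within D. f q - g q < a"
    using eventually_conj[OF 1 2]
  proof eventually_elim
    case (elim q)
    hence "f q < f p + e/2" "\<bar>g q - g p\<bar> < e/2" by (auto simp: dist_real_def)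
    thus ?case unfolding e_def abs_less_iff by argo
  qed
qed




definition SS :: "real^'n \<Rightarrow> real^'n \<Rightarrow> real" where "SS z y = 1 + (y - z) \<bullet> (y - z)"

lemma SS_ge1: "1 \<le> SS z y" by (simp add: SS_def)
lemma SS_pos: "0 < SS z y" using SS_ge1[of z y] by linarith

lemma SS_deriv: "(SS z has_derivative (\<lambda>h. 2 * ((y - z) \<bullet> h))) (at y)"
proof -
  have "((\<lambda>y. 1 + (y - z) \<bullet> (y - z)) has_derivative (\<lambda>h. 0 + ((y - z) \<bullet> (h - 0) + (h - 0) \<bullet> (y - z)))) (at y)"
    by (intro derivative_intros)
  thus ?thesis unfolding SS_def by (simp add: inner_commute)
qed

lemma SS_powr_deriv:
  "((\<lambda>y. SS z y powr c) has_derivative (\<lambda>h. c * SS z y powr (c - 1) * (2 * ((y - z) \<bullet> h)))) (at y)"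
proof -
  have "((\<lambda>y. SS z y powr c) has_derivative (\<lambda>h. SS z y powr c * (0 * ln (SS z y) + (2 * ((y - z) \<bullet> h)) * c / SS z y))) (at y)"
    by (rule has_derivative_powr[OF SS_deriv has_derivative_const SS_pos]) simp
  moreover have "SS z y powr c * (0 * ln (SS z y) + (2 * ((y - z) \<bullet> h)) * c / SS z y) = c * SS z y powr (c - 1) * (2 * ((y - z) \<bullet> h))" for h
    using SS_pos[of z y] by (simp add: powr_diff field_simps)
  ultimately show ?thesis by simp
qed

lemma SS_cont: "continuous_on UNIV (SS z)"
  unfolding SS_def by (intro continuous_intros)




lemma tensor_cont: "continuous_on S f \<Longrightarrow> continuous_on S (\<lambda>x. tensor (f x) (f x))"
  unfolding tensor_def by (intro continuous_intros)

lemma mv_aux: "((c::real) *\<^sub>R ((d *\<^sub>R mat 1) + (e *\<^sub>R tensor v v))) *v h = (c*d) *\<^sub>R h + (c*e*(v\<bullet>h)) *\<^sub>R v"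
  by (simp add: matrix_vector_mult_add_rdistrib scaleR_matrix_vector_assoc[symmetric] tensor_mult scaleR_add_right)

lemma deriv2_aux:
  fixes v h :: "real^'n"
  shows "(D * E * Pa) *\<^sub>R (h - 0) + (D * E * ((E/2-1) * Pb * (2 * (v \<bullet> h)))) *\<^sub>R v
     = ((D) *\<^sub>R ((E * Pa) *\<^sub>R mat 1 + (E * (E-2) * Pb) *\<^sub>R tensor v v)) *v h"
  unfolding mv_aux by (simp add: algebra_simps)

lemma C21_Psi:
  fixes z :: "real^'n"
  assumes qd: "\<And>s. (q has_real_derivative q' s) (at s)" and qc: "continuous_on UNIV q'"
  shows "C21 (\<lambda>y s. A + a * s + \<delta> * exp s * SS z y powr (\<beta>/2) + \<eta> * q s)
             (\<lambda>y s. (\<delta> * exp s * \<beta> * SS z y powr (\<beta>/2-1)) *\<^sub>R (y - z))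
             (\<lambda>y s. (\<delta> * exp s) *\<^sub>R ((\<beta> * SS z y powr (\<beta>/2-1)) *\<^sub>R mat 1
                     + (\<beta> * (\<beta>-2) * SS z y powr (\<beta>/2-2)) *\<^sub>R tensor (y - z) (y - z)))
             (\<lambda>y s. a + \<delta> * exp s * SS z y powr (\<beta>/2) + \<eta> * q' s)"
  unfolding C21_def
proof (intro conjI allI)
  fix x :: "real^'n" and t :: real
  have "((\<lambda>y. A + a * t + \<delta> * exp t * SS z y powr (\<beta>/2) + \<eta> * q t) has_derivative
        (\<lambda>h. 0 + \<delta> * exp t * ((\<beta>/2) * SS z x powr (\<beta>/2 - 1) * (2 * ((x - z) \<bullet> h))) + 0)) (at x)"
    by (intro derivative_intros SS_powr_deriv)
  moreover have "(\<lambda>h. 0 + \<delta> * exp t * ((\<beta>/2) * SS z x powr (\<beta>/2 - 1) * (2 * ((x - z) \<bullet> h))) + 0)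
     = (\<lambda>h. ((\<delta> * exp t * \<beta> * SS z x powr (\<beta>/2-1)) *\<^sub>R (x - z)) \<bullet> h)"
    by (rule ext) (simp add: inner_scaleR_left)
  ultimately show "((\<lambda>y. A + a * t + \<delta> * exp t * SS z y powr (\<beta>/2) + \<eta> * q t) has_derivative
        (\<lambda>h. ((\<delta> * exp t * \<beta> * SS z x powr (\<beta>/2-1)) *\<^sub>R (x - z)) \<bullet> h)) (at x)" by simp
next
  fix x :: "real^'n" and t :: real
  have "((\<lambda>y. (\<delta> * exp t * \<beta> * SS z y powr (\<beta>/2-1)) *\<^sub>R (y - z)) has_derivative
     (\<lambda>h. (\<delta> * exp t * \<beta> * SS z x powr (\<beta>/2-1)) *\<^sub>R (h - 0) +
          (\<delta> * exp t * \<beta> * ((\<beta>/2-1) * SS z x powr (\<beta>/2-1-1) * (2 * ((x - z) \<bullet> h)))) *\<^sub>R (x - z))) (at x)"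
    by (intro derivative_intros SS_powr_deriv)
  moreover have "(\<lambda>h. (\<delta> * exp t * \<beta> * SS z x powr (\<beta>/2-1)) *\<^sub>R (h - 0) +
          (\<delta> * exp t * \<beta> * ((\<beta>/2-1) * SS z x powr (\<beta>/2-1-1) * (2 * ((x - z) \<bullet> h)))) *\<^sub>R (x - z))
     = (\<lambda>h. ((\<delta> * exp t) *\<^sub>R ((\<beta> * SS z x powr (\<beta>/2-1)) *\<^sub>R mat 1
                     + (\<beta> * (\<beta>-2) * SS z x powr (\<beta>/2-2)) *\<^sub>R tensor (x - z) (x - z))) *v h)"
    using deriv2_aux[where D="\<delta> * exp t" and E=\<beta> and Pa="SS z x powr (\<beta>/2-1)" and Pb="SS z x powr (\<beta>/2-1-1)" and v="x - z"]
    by (simp add: diff_divide_distrib)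
  ultimately show "((\<lambda>y. (\<delta> * exp t * \<beta> * SS z y powr (\<beta>/2-1)) *\<^sub>R (y - z)) has_derivative
     (\<lambda>h. ((\<delta> * exp t) *\<^sub>R ((\<beta> * SS z x powr (\<beta>/2-1)) *\<^sub>R mat 1
                     + (\<beta> * (\<beta>-2) * SS z x powr (\<beta>/2-2)) *\<^sub>R tensor (x - z) (x - z))) *v h)) (at x)" by simp
next
  fix x :: "real^'n" and t :: real
  show "((\<lambda>s. A + a * s + \<delta> * exp s * SS z x powr (\<beta>/2) + \<eta> * q s) has_real_derivative
     a + \<delta> * exp t * SS z x powr (\<beta>/2) + \<eta> * q' t) (at t)"
    by (auto intro!: derivative_eq_intros qd)
next
  have c1: "continuous_on UNIV (\<lambda>p::(real^'n)\<times>real. SS z (fst p))"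
    unfolding SS_def by (intro continuous_intros)
  have c2: "continuous_on UNIV (\<lambda>p::(real^'n)\<times>real. SS z (fst p) powr c)" for c
    using SS_pos by (intro continuous_on_powr c1 continuous_intros) (auto simp: less_le)
  show "continuous_on UNIV (\<lambda>p. (\<delta> * exp (snd p) * \<beta> * SS z (fst p) powr (\<beta>/2-1)) *\<^sub>R (fst p - z))"
    by (intro continuous_intros c2)
  show "continuous_on UNIV (\<lambda>p. (\<delta> * exp (snd p)) *\<^sub>R ((\<beta> * SS z (fst p) powr (\<beta>/2-1)) *\<^sub>R mat 1
                     + (\<beta> * (\<beta>-2) * SS z (fst p) powr (\<beta>/2-2)) *\<^sub>R tensor (fst p - z) (fst p - z)))"
    by (intro continuous_intros c2 tensor_cont)
  show "continuous_on UNIV (\<lambda>p. a + \<delta> * exp (snd p) * SS z (fst p) powr (\<beta>/2) + \<eta> * q' (snd p))"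
    by (intro continuous_intros c2 continuous_on_compose2[OF qc]) auto
qed




lemma H_bound:
  fixes H :: "real^'n \<Rightarrow> real^'n^'n \<Rightarrow> real"
  assumes HC: "cond_H H k1" and k1: "0 < k1"
    and Lam: "\<And>lam e. norm e = 1 \<Longrightarrow> H e (lam *\<^sub>R tensor e e + mat 1) \<le> \<Lambda>"
    and c: "0 < c"
  shows "H (c *\<^sub>R v) (c *\<^sub>R mat 1 + \<mu> *\<^sub>R tensor v v) \<le> \<Lambda> * ((c * norm v) powr k1 * c)"
proof -
  have hom1: "\<And>\<theta> q X. symm X \<Longrightarrow> H (\<theta> *\<^sub>R q) X = pw \<bar>\<theta>\<bar> k1 * H q X"
   and hom2: "\<And>\<theta> q X. symm X \<Longrightarrow> 0 < \<theta> \<Longrightarrow> H q (\<theta> *\<^sub>R X) = \<theta> * H q X"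
    using HC unfolding cond_H_def by blast+
  have sX: "symm (c *\<^sub>R mat 1 + \<mu> *\<^sub>R tensor v v)"
    by (intro symm_add symm_scale symm_mat1 symm_tensor)
  show ?thesis
  proof (cases "v = 0")
    case True
    have "H (c *\<^sub>R v) (c *\<^sub>R mat 1 + \<mu> *\<^sub>R tensor v v) = H (0 *\<^sub>R v) (c *\<^sub>R mat 1 + \<mu> *\<^sub>R tensor v v)"
      using True by simp
    also have "\<dots> = 0" using hom1[OF sX, of 0 v] k1 by (simp add: pw_def)
    finally show ?thesis using True k1 by simp
  next
    case False
    define r where "r = norm v"
    have r: "0 < r" using False by (simp add: r_def)
    define e where "e = (1/r) *\<^sub>R v"
    have ve: "v = r *\<^sub>R e" using r by (simp add: e_def)
    have ne: "norm e = 1" using r by (simp add: e_def r_def)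
    define lam where "lam = \<mu> * r^2 / c"
    have tv: "tensor v v = r^2 *\<^sub>R tensor e e" unfolding ve by (rule tensor_scale)
    have X: "c *\<^sub>R mat 1 + \<mu> *\<^sub>R tensor v v = c *\<^sub>R (lam *\<^sub>R tensor e e + mat 1)"
      using c unfolding tv lam_def by (simp add: scaleR_add_right algebra_simps)
    have sY: "symm (lam *\<^sub>R tensor e e + mat 1)"
      by (intro symm_add symm_scale symm_mat1 symm_tensor)
    have "H (c *\<^sub>R v) (c *\<^sub>R mat 1 + \<mu> *\<^sub>R tensor v v) = H ((c * r) *\<^sub>R e) (c *\<^sub>R (lam *\<^sub>R tensor e e + mat 1))"
      unfolding X by (subst ve) simp
    also have "\<dots> = pw \<bar>c * r\<bar> k1 * (c * H e (lam *\<^sub>R tensor e e + mat 1))"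
      using hom1[OF symm_scale[OF sY, of c], of "c*r" e] hom2[OF sY c, of e] by simp
    also have "\<dots> = (c * r) powr k1 * c * H e (lam *\<^sub>R tensor e e + mat 1)"
      using k1 c r by (simp add: pw_def)
    also have "\<dots> \<le> (c * r) powr k1 * c * \<Lambda>"
      using Lam[OF ne, of lam] c r by (intro mult_left_mono) auto
    finally show ?thesis by (simp add: r_def mult_ac)
  qed
qed




lemma q_bound:
  fixes a b :: real
  assumes a: "0 < a" and b: "a/2 \<le> b"
  shows "1/b \<le> 1/a + (a-b)/a^2 + 2*(a-b)^2/a^3"
proof -
  have bpos: "0 < b" using a b by linarith
  have id: "1/b - 1/a - (a-b)/a^2 = (a-b)^2/(a^2*b)"
    using a bpos by (simp add: field_simps power2_eq_square)
  have "(a-b)^2/(a^2*b) \<le> (a-b)^2/(a^2*(a/2))"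
    using a bpos b by (intro divide_left_mono mult_pos_pos) auto
  also have "\<dots> = 2*(a-b)^2/a^3" using a by (simp add: field_simps power2_eq_square power3_eq_cube)
  finally show ?thesis using id by linarith
qed

lemma q_deriv:
  fixes A1 A2 A3 t0 :: real
  shows "((\<lambda>s. A1 + A2*(s-t0) + A3*(s-t0)^2) has_real_derivative (A2 + 2*A3*(s-t0))) (at s)"
  by (auto intro!: derivative_eq_intros simp: field_simps)

lemma q_cont: "continuous_on UNIV (\<lambda>s::real. A2 + 2*A3*(s-t0))"
  by (intro continuous_intros)




lemma main_cmp:
  fixes H :: "real^'n \<Rightarrow> real^'n^'n \<Rightarrow> real"
    and u :: "real^'n \<Rightarrow> real \<Rightarrow> real" and z :: "real^'n"
    and chi Z :: "real \<Rightarrow> real"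
  assumes HC: "cond_H H k1" and k1: "0 < k1" and T: "0 < T"
    and Lam: "\<And>lam e. norm e = 1 \<Longrightarrow> H e (lam *\<^sub>R tensor e e + mat 1) \<le> \<Lambda>"
    and chiB: "\<forall>t\<in>{0<..<T}. \<bar>chi t\<bar> \<le> C"
    and u_usc: "usc_on (UNIV \<times> {0..<T}) (\<lambda>p. u (fst p) (snd p))"
    and u_sub: "visc_sub H Z chi \<sigma> T u"
    and u_init: "\<forall>x. u x 0 \<le> M"
    and growth_fin: "\<forall>\<^sub>F R in at_top. bdd_above {u x t | x t. norm (x - z) \<le> R \<and> 0 < t \<and> t < T}"
    and growth: "(\<lambda>R. Sup {u x t | x t. norm (x - z) \<le> R \<and> 0 < t \<and> t < T}) \<in> o(\<lambda>R. R powr \<beta>)"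
    and \<beta>: "1 \<le> \<beta>" and \<epsilon>: "0 < \<epsilon>" and \<eta>: "0 < \<eta>" and \<delta>: "0 < \<delta>" and a: "0 \<le> a"
    and Key: "\<And>w S r. 0 < w \<Longrightarrow> w \<le> \<delta> * exp T \<Longrightarrow> 1 \<le> S \<Longrightarrow> 0 \<le> r \<Longrightarrow> r^2 \<le> S \<Longrightarrow>
        \<Lambda> * (((w*\<beta>*S powr (\<beta>/2-1)) * r) powr k1 * (w*\<beta>*S powr (\<beta>/2-1)))
        + C * pw ((w*\<beta>*S powr (\<beta>/2-1)) * r) \<sigma> < a + w * S powr (\<beta>/2)"
    and that: "t \<in> {0<..<T}"
  shows "u x t \<le> M + \<epsilon> + a*t + \<delta>*exp t*SS z x powr (\<beta>/2) + \<eta>/(T-t)"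
proof (rule ccontr)
  define Phi where "Phi = (\<lambda>x t. M + \<epsilon> + a*t + \<delta>*exp t*SS z x powr (\<beta>/2) + \<eta>/(T-t))"
  define Sset where "Sset = (\<lambda>R. {u x t | x t. norm (x - z) \<le> R \<and> 0 < t \<and> t < T})"
  define x1 t1 where "x1 = x" and "t1 = t"
  assume "\<not> ?thesis"
  hence pos1: "u x1 t1 - Phi x1 t1 > 0" by (simp add: Phi_def x1_def t1_def)
  have t1: "0 < t1" "t1 < T" using that by (auto simp: t1_def)
  have SSpow_ge: "\<rho> powr \<beta> \<le> SS z y powr (\<beta>/2)" if "norm (y - z) = \<rho>" for y \<rho>
  proof -
    show ?thesis
    proof (cases "\<rho> = 0")
      case True thus ?thesis using \<beta> by simp
    next
      case False
      hence rp: "0 < \<rho>" using that by (metis norm_ge_zero order_le_less)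
      have "\<rho> powr \<beta> = (\<rho> powr 2) powr (\<beta>/2)" by (simp add: powr_powr)
      also have "\<dots> = (\<rho>^2) powr (\<beta>/2)" using rp by (simp add: powr_realpow)
      also have "\<dots> \<le> SS z y powr (\<beta>/2)" using \<beta> that
        by (intro powr_mono2) (auto simp: SS_def power2_norm_eq_inner)
      finally show ?thesis .
    qed
  qed
  have ev1: "\<forall>\<^sub>F R in at_top. norm (Sup (Sset R)) \<le> (\<delta>/2) * norm (R powr \<beta>)"
    using landau_o.smallD[OF growth, of "\<delta>/2"] \<delta> by (simp add: Sset_def)
  have ev2: "\<forall>\<^sub>F R in at_top. bdd_above (Sset R)" using growth_fin by (simp add: Sset_def)
  have ev3: "\<forall>\<^sub>F R::real in at_top. R \<ge> max 1 (max (2*\<bar>M\<bar>/\<delta> + 1) (norm (x1 - z) + 1))"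
    by (rule eventually_ge_at_top)
  obtain R0 where R0: "\<And>R. R \<ge> R0 \<Longrightarrow> norm (Sup (Sset R)) \<le> (\<delta>/2) * norm (R powr \<beta>) \<and> bdd_above (Sset R)
      \<and> R \<ge> max 1 (max (2*\<bar>M\<bar>/\<delta> + 1) (norm (x1 - z) + 1))"
    using eventually_conj[OF ev1 eventually_conj[OF ev2 ev3]] unfolding eventually_at_top_linorder by blast
  have R0ge: "R0 \<ge> 1" "R0 > norm (x1 - z)" using R0[of R0] by auto
  have claimA: "u y s < Phi y s" if y: "R0 \<le> norm (y - z)" and s: "0 < s" "s < T" for y s
  proof -
    define \<rho> where "\<rho> = norm (y - z)"
    have R: "norm (Sup (Sset \<rho>)) \<le> (\<delta>/2) * norm (\<rho> powr \<beta>)" "bdd_above (Sset \<rho>)"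
      "\<rho> \<ge> 1" "\<rho> \<ge> 2*\<bar>M\<bar>/\<delta> + 1"
      using R0[of \<rho>] y by (auto simp: \<rho>_def)
    have "u y s \<in> Sset \<rho>" using s by (auto simp: Sset_def \<rho>_def)
    hence "u y s \<le> Sup (Sset \<rho>)" using R(2) by (rule cSup_upper)
    also have "\<dots> \<le> (\<delta>/2) * \<rho> powr \<beta>" using R(1) by simp
    finally have u1: "u y s \<le> (\<delta>/2) * \<rho> powr \<beta>" .
    have "\<rho> = \<rho> powr 1" using R(3) by simp
    also have "\<dots> \<le> \<rho> powr \<beta>" using R(3) \<beta> by (intro powr_mono) auto
    finally have rb: "\<rho> \<le> \<rho> powr \<beta>" .
    have "(\<delta>/2) * (2*\<bar>M\<bar>/\<delta> + 1) \<le> (\<delta>/2) * \<rho> powr \<beta>" using R(4) rb \<delta> by (intro mult_left_mono) auto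
    moreover have "(\<delta>/2) * (2*\<bar>M\<bar>/\<delta> + 1) = \<bar>M\<bar> + \<delta>/2" using \<delta> by (simp add: field_simps)
    ultimately have m: "\<bar>M\<bar> < (\<delta>/2) * \<rho> powr \<beta>" using \<delta> by linarith
    have "\<delta> * \<rho> powr \<beta> \<le> \<delta> * exp s * SS z y powr (\<beta>/2)"
    proof -
      have "\<rho> powr \<beta> \<le> SS z y powr (\<beta>/2)" by (rule SSpow_ge) (simp add: \<rho>_def)
      also have "\<dots> \<le> exp s * SS z y powr (\<beta>/2)" using s by (intro mult_right_mono[of 1 "exp s", simplified]) auto
      finally show ?thesis using \<delta> by (simp add: mult.assoc)
    qed
    moreover have "0 \<le> a * s" using a s by simp
    moreover have "0 < \<eta>/(T-s)" using \<eta> s by simp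
    ultimately show ?thesis using u1 m \<epsilon> unfolding Phi_def by linarith
  qed
  define B where "B = Sup (Sset R0)"
  define \<tau> where "\<tau> = \<eta> / (\<bar>B - M\<bar> + 1)"
  have \<tau>: "0 < \<tau>" using \<eta> by (simp add: \<tau>_def)
  define T' where "T' = max t1 (T - \<tau>)"
  have T': "T' < T" "0 < T'" "t1 \<le> T'" using t1 \<tau> by (auto simp: T'_def)
  have Phi_ge: "M + \<eta>/(T-s) \<le> Phi y s" if "0 \<le> s" for y s
  proof -
    have "0 \<le> \<delta>*exp s*SS z y powr (\<beta>/2)" using \<delta> by simp
    thus ?thesis using \<epsilon> a that unfolding Phi_def by (smt (verit) mult_nonneg_nonneg)
  qed
  have claimB: "u y s < Phi y s" if y: "norm (y - z) \<le> R0" and s: "T' < s" "s < T" for y s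
  proof -
    have bd: "bdd_above (Sset R0)" using R0[of R0] by simp
    have "u y s \<in> Sset R0" unfolding Sset_def using s y T'(2) by (intro CollectI exI[of _ y] exI[of _ s]) auto
    hence uB: "u y s \<le> B" unfolding B_def using bd by (rule cSup_upper)
    have Ts: "0 < T - s" "T - s < \<tau>" using s T'_def by auto
    have "\<eta>/\<tau> < \<eta>/(T-s)" using Ts \<eta> by (intro divide_strict_left_mono) auto
    moreover have "\<eta>/\<tau> = \<bar>B - M\<bar> + 1" using \<eta> by (simp add: \<tau>_def)
    moreover have "M + \<eta>/(T-s) \<le> Phi y s" using Phi_ge[of s y] s T' by simp
    ultimately show ?thesis using uB by linarith
  qed
  define K where "K = cball z R0 \<times> {0..T'}"
  have Kc: "compact K" unfolding K_def by (intro compact_Times compact_cball compact_Icc)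
  have x1K: "(x1, t1) \<in> K" using R0ge t1 T' by (auto simp: K_def dist_norm norm_minus_commute)
  have KD: "K \<subseteq> UNIV \<times> {0..<T}" using T' by (auto simp: K_def)
  have Phic: "continuous_on (UNIV \<times> {0..<T}) (\<lambda>p. Phi (fst p) (snd p))"
  proof -
    have c1: "continuous_on (UNIV \<times> {0..<T}) (\<lambda>p::(real^'n)\<times>real. SS z (fst p))"
      unfolding SS_def by (intro continuous_intros)
    show ?thesis unfolding Phi_def
      using SS_pos by (intro continuous_intros continuous_on_powr c1) (auto simp: less_le)
  qed
  have fusc: "usc_on (UNIV \<times> {0..<T}) (\<lambda>p. u (fst p) (snd p) - Phi (fst p) (snd p))"
    by (rule usc_diff[OF u_usc Phic])
  obtain p0 where p0: "p0 \<in> K" "\<And>p. p \<in> K \<Longrightarrow> u (fst p) (snd p) - Phi (fst p) (snd p) \<le> u (fst p0) (snd p0) - Phi (fst p0) (snd p0)"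
    using usc_max[OF Kc _ KD fusc] x1K by blast
  define x0 t0 where "x0 = fst p0" and "t0 = snd p0"
  have max0: "u x1 t1 - Phi x1 t1 \<le> u x0 t0 - Phi x0 t0" using p0(2)[OF x1K] by (simp add: x0_def t0_def)
  hence pos0: "u x0 t0 - Phi x0 t0 > 0" using pos1 by linarith
  have t0: "0 \<le> t0" "t0 \<le> T'" "norm (x0 - z) \<le> R0" using p0(1) by (auto simp: K_def x0_def t0_def dist_norm norm_minus_commute)
  have "t0 \<noteq> 0"
  proof
    assume "t0 = 0"
    hence "u x0 t0 \<le> M" using u_init by simp
    moreover have "M + \<eta>/(T - t0) \<le> Phi x0 t0" using Phi_ge t0 by simp
    moreover have "0 < \<eta>/(T-t0)" using \<eta> T' t0 by simp
    ultimately show False using pos0 by linarith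
  qed
  hence t0': "0 < t0" "t0 < T" using t0 T' by auto
  have glob: "u y s - Phi y s \<le> u x0 t0 - Phi x0 t0" if s: "0 < s" "s < T" for y s
  proof (cases "(y, s) \<in> K")
    case True thus ?thesis using p0(2)[OF True] by (simp add: x0_def t0_def)
  next
    case False
    hence "R0 < norm (y - z) \<or> (norm (y - z) \<le> R0 \<and> T' < s)" using s by (auto simp: K_def dist_norm norm_minus_commute)
    hence "u y s < Phi y s" using claimA claimB s by (meson less_imp_le)
    thus ?thesis using pos0 by linarith
  qed
  define a0 where "a0 = T - t0"
  have a0: "0 < a0" using t0' by (simp add: a0_def)
  define q where "q = (\<lambda>s. 1/a0 + (1/a0^2)*(s-t0) + (2/a0^3)*(s-t0)^2)"
  define q' where "q' = (\<lambda>s. 1/a0^2 + 2*(2/a0^3)*(s-t0))"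
  define Psi where "Psi = (\<lambda>y s. (M + \<epsilon>) + a * s + \<delta> * exp s * SS z y powr (\<beta>/2) + \<eta> * q s)"
  define DPsi where "DPsi = (\<lambda>y s. (\<delta> * exp s * \<beta> * SS z y powr (\<beta>/2-1)) *\<^sub>R (y - z))"
  define D2Psi where "D2Psi = (\<lambda>y s. (\<delta> * exp s) *\<^sub>R ((\<beta> * SS z y powr (\<beta>/2-1)) *\<^sub>R mat 1
                     + (\<beta> * (\<beta>-2) * SS z y powr (\<beta>/2-2)) *\<^sub>R tensor (y - z) (y - z)))"
  define Psit where "Psit = (\<lambda>y s. a + \<delta> * exp s * SS z y powr (\<beta>/2) + \<eta> * q' s)"
  have C21: "C21 Psi DPsi D2Psi Psit"
    unfolding Psi_def DPsi_def D2Psi_def Psit_def q_def q'_def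
    by (rule C21_Psi[OF q_deriv q_cont])
  have loc: "\<exists>r>0. \<forall>y s. s \<in> {0<..<T} \<and> dist (y, s) (x0, t0) < r \<longrightarrow>
                   u y s - Psi y s \<le> u x0 t0 - Psi x0 t0"
  proof (intro exI[of _ "a0/2"] conjI allI impI)
    show "0 < a0/2" using a0 by simp
    fix y s assume ys: "s \<in> {0<..<T} \<and> dist (y, s) (x0, t0) < a0/2"
    have "dist s t0 \<le> dist (y, s) (x0, t0)" using dist_snd_le[of "(y,s)" "(x0,t0)"] by simp
    hence st: "\<bar>s - t0\<bar> < a0/2" using ys by (simp add: dist_real_def)
    have "1/(T-s) \<le> 1/a0 + (a0 - (T-s))/a0^2 + 2*(a0 - (T-s))^2/a0^3"
      using st unfolding abs_less_iff by (intro q_bound a0) (simp add: a0_def)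
    hence "1/(T-s) \<le> q s" unfolding q_def by (simp add: a0_def)
    hence "\<eta>/(T-s) \<le> \<eta> * q s" using \<eta> by (metis mult_left_mono less_imp_le times_divide_eq_right mult_1_right)
    hence "Phi y s \<le> Psi y s" unfolding Phi_def Psi_def by simp
    moreover have "Psi x0 t0 = Phi x0 t0" unfolding Phi_def Psi_def q_def by (simp add: a0_def)
    ultimately show "u y s - Psi y s \<le> u x0 t0 - Psi x0 t0" using glob[of s y] ys by auto
  qed
  have P: "0 \<le> P_op H Z chi \<sigma> t0 (u x0 t0) (Psit x0 t0) (DPsi x0 t0) (D2Psi x0 t0)"
  proof -
    have "t0 \<in> {0<..<T}" using t0' by simp
    thus ?thesis using u_sub C21 loc unfolding visc_sub_def by blast
  qed
  define w where "w = \<delta> * exp t0"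
  define S where "S = SS z x0"
  define v where "v = x0 - z"
  define c where "c = w*\<beta>*S powr (\<beta>/2-1)"
  define r where "r = norm v"
  have w: "0 < w" "w \<le> \<delta> * exp T" using \<delta> t0' by (auto simp: w_def)
  have S: "1 \<le> S" by (simp add: S_def SS_ge1)
  have c: "0 < c" using w \<beta> S by (simp add: c_def)
  have r: "0 \<le> r" "r^2 \<le> S" by (auto simp: r_def S_def SS_def v_def power2_norm_eq_inner)
  have Dq: "DPsi x0 t0 = c *\<^sub>R v" by (simp add: DPsi_def c_def w_def S_def v_def mult.assoc)
  have DX: "D2Psi x0 t0 + Z (u x0 t0) *\<^sub>R tensor (DPsi x0 t0) (DPsi x0 t0)
      = c *\<^sub>R mat 1 + (w*(\<beta>*(\<beta>-2)*S powr (\<beta>/2-2)) + Z (u x0 t0) * c^2) *\<^sub>R tensor v v"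
    unfolding Dq tensor_scale by (simp add: D2Psi_def c_def w_def S_def v_def scaleR_add_right algebra_simps)
  have Hb: "H (DPsi x0 t0) (D2Psi x0 t0 + Z (u x0 t0) *\<^sub>R tensor (DPsi x0 t0) (DPsi x0 t0))
      \<le> \<Lambda> * ((c * r) powr k1 * c)"
    unfolding DX unfolding Dq r_def by (rule H_bound[OF HC k1 Lam c])
  have pwnn: "0 \<le> pw x \<sigma>" for x by (simp add: pw_def)
  have nq: "norm (DPsi x0 t0) = c * r" using c by (simp add: Dq r_def)
  have chib: "chi t0 * pw (norm (DPsi x0 t0)) \<sigma> \<le> C * pw (c * r) \<sigma>"
  proof -
    have "chi t0 * pw (c*r) \<sigma> \<le> \<bar>chi t0\<bar> * pw (c*r) \<sigma>" using pwnn by (intro mult_right_mono) auto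
    also have "\<dots> \<le> C * pw (c*r) \<sigma>" using chiB t0' pwnn by (intro mult_right_mono) auto
    finally show ?thesis by (simp add: nq)
  qed
  have Pt: "a + w * S powr (\<beta>/2) \<le> Psit x0 t0"
    using \<eta> a0 by (simp add: Psit_def q'_def w_def S_def)
  have "\<Lambda> * ((c * r) powr k1 * c) + C * pw (c * r) \<sigma> < a + w * S powr (\<beta>/2)"
    using Key[OF w S r] unfolding c_def .
  with P Hb chib Pt show False unfolding P_op_def by linarith
qed




lemma r_le_sqrtS:
  fixes r S :: real
  assumes "0 \<le> r" "r^2 \<le> S" shows "r \<le> S powr (1/2)"
proof -
  have S: "0 \<le> S" using assms(2) zero_le_power2[of r] by linarith
  have "r = sqrt (r^2)" using assms(1) by simp
  also have "\<dots> \<le> sqrt S" using assms(2) by (rule real_sqrt_le_mono)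
  also have "\<dots> = S powr (1/2)" using S by (simp add: powr_half_sqrt)
  finally show ?thesis .
qed

lemma cS_bound:
  fixes w \<beta> S r p :: real
  assumes w: "0 < w" and S: "1 \<le> S" and r: "0 \<le> r" "r^2 \<le> S" and \<beta>: "0 < \<beta>" and p: "0 \<le> p"
  shows "((w*\<beta>*S powr (\<beta>/2-1)) * r) powr p \<le> (w*\<beta>) powr p * S powr (p*(\<beta>-1)/2)"
proof -
  define c where "c = w*\<beta>*S powr (\<beta>/2-1)"
  have c: "0 < c" using w \<beta> S by (simp add: c_def)
  have Sp: "0 < S" using S by simp
  have "(c * r) powr p \<le> (c * S powr (1/2)) powr p"
    using c r p by (intro powr_mono2 mult_left_mono r_le_sqrtS) auto
  also have "\<dots> = (w*\<beta>) powr p * (S powr (\<beta>/2-1)) powr p * (S powr (1/2)) powr p"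
    using w \<beta> Sp by (simp add: c_def powr_mult)
  also have "\<dots> = (w*\<beta>) powr p * S powr (p*(\<beta>-1)/2)"
  proof -
    have "(S powr (\<beta>/2-1)) powr p * (S powr (1/2)) powr p = S powr ((\<beta>/2-1)*p + 1/2*p)"
      by (simp add: powr_powr powr_add)
    also have "(\<beta>/2-1)*p + 1/2*p = p*(\<beta>-1)/2" by (simp add: algebra_simps)
    finally show ?thesis by (simp add: mult.assoc)
  qed
  finally show ?thesis by (simp add: c_def)
qed

lemma young_simple:
  fixes Y A \<sigma> s :: real
  assumes \<sigma>: "0 < \<sigma>" "\<sigma> \<le> s" and A: "0 < A" and Y: "0 \<le> Y"
  shows "Y powr \<sigma> \<le> A + A powr (1 - s/\<sigma>) * Y powr s"
proof (cases "Y powr \<sigma> \<le> A")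
  case True
  have "0 \<le> A powr (1 - s/\<sigma>) * Y powr s" by simp
  with True show ?thesis by linarith
next
  case False
  hence YA: "A < Y powr \<sigma>" by simp
  have Ypos: "0 < Y" using YA A Y by (cases "Y = 0") auto
  have e: "0 \<le> s/\<sigma> - 1" using \<sigma> by (simp add: field_simps)
  have "Y powr s = Y powr \<sigma> * (Y powr \<sigma>) powr (s/\<sigma> - 1)"
    using \<sigma> Ypos by (simp add: powr_powr powr_add[symmetric] algebra_simps)
  also have "\<dots> \<ge> Y powr \<sigma> * A powr (s/\<sigma> - 1)"
    using YA A e by (intro mult_left_mono powr_mono2) auto
  finally have "A powr (1 - s/\<sigma>) * (Y powr \<sigma> * A powr (s/\<sigma> - 1)) \<le> A powr (1 - s/\<sigma>) * Y powr s"
    by (intro mult_left_mono) auto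
  moreover have "A powr (1 - s/\<sigma>) * (Y powr \<sigma> * A powr (s/\<sigma> - 1)) = Y powr \<sigma>"
    using A by (simp add: mult.left_commute powr_add[symmetric])
  ultimately show ?thesis using A by simp
qed

lemma small_W:
  fixes p L :: real
  assumes p: "0 < p" and L: "0 \<le> L"
  shows "\<exists>W>0. \<forall>w. 0 < w \<and> w \<le> W \<longrightarrow> L * w powr p \<le> 1/3"
proof -
  define W where "W = (1/(3*(L+1))) powr (1/p)"
  have W: "0 < W" using L by (simp add: W_def)
  have WP: "W powr p = 1/(3*(L+1))" using L p by (simp add: W_def powr_powr)
  show ?thesis
  proof (intro exI[of _ W] conjI allI impI W)
    fix w assume w: "0 < w \<and> w \<le> W"
    have "w powr p \<le> W powr p" using w p by (intro powr_mono2) auto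
    hence "L * w powr p \<le> L * (1/(3*(L+1)))" using L WP by (intro mult_left_mono) auto
    also have "\<dots> \<le> 1/3" using L by (simp add: field_simps)
    finally show "L * w powr p \<le> 1/3" .
  qed
qed




lemma Hterm_bound:
  fixes w \<beta> S r k1 :: real
  assumes w: "0 < w" and S: "1 \<le> S" and r: "0 \<le> r" "r^2 \<le> S" and \<beta>: "1 \<le> \<beta>" and k1: "0 \<le> k1"
    and kb: "k1 * \<beta> \<le> k1 + 2"
  shows "((w*\<beta>*S powr (\<beta>/2-1)) * r) powr k1 * (w*\<beta>*S powr (\<beta>/2-1))
         \<le> (\<beta> powr (k1+1) * w powr k1) * (w * S powr (\<beta>/2))"
proof -
  have Sp: "0 < S" using S by simp
  have "((w*\<beta>*S powr (\<beta>/2-1)) * r) powr k1 * (w*\<beta>*S powr (\<beta>/2-1))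
        \<le> ((w*\<beta>) powr k1 * S powr (k1*(\<beta>-1)/2)) * (w*\<beta>*S powr (\<beta>/2-1))"
    using cS_bound[OF w S r _ k1] \<beta> w by (intro mult_right_mono) auto
  also have "\<dots> = (\<beta> powr (k1+1) * w powr k1) * w * (S powr (k1*(\<beta>-1)/2) * S powr (\<beta>/2-1))"
    using w \<beta> by (simp add: powr_mult powr_add mult_ac)
  also have "S powr (k1*(\<beta>-1)/2) * S powr (\<beta>/2-1) = S powr (k1*(\<beta>-1)/2 + (\<beta>/2-1))"
    by (simp add: powr_add)
  also have "\<dots> \<le> S powr (\<beta>/2)"
    using S kb by (intro powr_mono) (auto simp: field_simps)
  finally show ?thesis using w \<beta> by (simp add: mult_left_mono mult_ac)
qed

lemma chi_bound:
  fixes w \<beta> S r \<sigma> s A C :: real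
  assumes w: "0 < w" and S: "1 \<le> S" and r: "0 \<le> r" "r^2 \<le> S" and \<beta>: "1 \<le> \<beta>"
    and \<sigma>: "0 < \<sigma>" "\<sigma> \<le> s" and sb: "s*(\<beta>-1) \<le> \<beta>" and A: "0 < A" and C: "0 \<le> C"
  shows "C * pw ((w*\<beta>*S powr (\<beta>/2-1)) * r) \<sigma>
         \<le> C * A + (C * A powr (1 - s/\<sigma>) * \<beta> powr s * w powr (s-1)) * (w * S powr (\<beta>/2))"
proof -
  define Y where "Y = (w*\<beta>*S powr (\<beta>/2-1)) * r"
  have Y: "0 \<le> Y" using w \<beta> r by (simp add: Y_def)
  have s0: "0 \<le> s" using \<sigma> by simp
  have "pw Y \<sigma> = Y powr \<sigma>" using \<sigma> by (simp add: pw_def)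
  also have "\<dots> \<le> A + A powr (1 - s/\<sigma>) * Y powr s" by (rule young_simple[OF \<sigma> A Y])
  also have "Y powr s \<le> (w*\<beta>) powr s * S powr (s*(\<beta>-1)/2)"
    unfolding Y_def using \<beta> by (intro cS_bound[OF w S r _ s0]) auto
  also have "S powr (s*(\<beta>-1)/2) \<le> S powr (\<beta>/2)" using S sb by (intro powr_mono) auto
  also have "(w*\<beta>) powr s = \<beta> powr s * w powr (s-1) * w"
    using w \<beta> by (simp add: powr_mult powr_diff)
  finally have "pw Y \<sigma> \<le> A + A powr (1 - s/\<sigma>) * (\<beta> powr s * w powr (s-1) * w * S powr (\<beta>/2))"
    using w \<beta> by (simp add: mult_left_mono)
  hence "C * pw Y \<sigma> \<le> C * (A + A powr (1 - s/\<sigma>) * (\<beta> powr s * w powr (s-1) * w * S powr (\<beta>/2)))"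
    using C by (rule mult_left_mono)
  thus ?thesis unfolding Y_def by (simp add: algebra_simps)
qed




theorem theorem2p6:
  fixes H :: "real^'n \<Rightarrow> real^'n^'n \<Rightarrow> real"
    and k1 T \<sigma> m \<beta> :: real
    and h :: "real^'n \<Rightarrow> real"
    and chi Z :: "real \<Rightarrow> real"
    and u :: "real^'n \<Rightarrow> real \<Rightarrow> real"
    and z :: "real^'n"
  defines "\<gamma> \<equiv> (k1 + 1) + 1"
  defines "\<gamma>star \<equiv> \<gamma> / (\<gamma> - 2)"
  defines "\<sigma>star \<equiv> \<sigma> / (\<sigma> - 1)"
  assumes n2: "CARD('n) \<ge> 2"
    and HC: "cond_H H k1"
    and k_gt1: "k1 + 1 > 1"
    and T: "0 < T"
    and h_cont: "continuous_on UNIV h" and h_bdd: "bdd_above (range h)"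
    and chi_cont: "continuous_on {0<..<T} chi" and chi_bdd: "bounded (chi ` {0<..<T})"
    and \<sigma>: "0 \<le> \<sigma>"
    and Z_cont: "continuous_on {m..} Z"
    and Z_nonneg: "\<forall>s\<in>{m..}. 0 \<le> Z s"
    and Z_noninc: "\<forall>a b. m \<le> a \<and> a \<le> b \<longrightarrow> Z b \<le> Z a"
    and u_usc: "usc_on (UNIV \<times> {0..<T}) (\<lambda>p. u (fst p) (snd p))"
    and u_inf: "\<exists>c>m. \<forall>x. \<forall>t\<in>{0..<T}. c \<le> u x t"
    and u_sub: "visc_sub H Z chi \<sigma> T u"
    and u_init: "\<forall>x. u x 0 \<le> h x"
    and growth_fin: "\<forall>\<^sub>F R in at_top. bdd_above {u x t | x t. norm (x - z) \<le> R \<and> 0 < t \<and> t < T}"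
    and growth: "(\<lambda>R. Sup {u x t | x t. norm (x - z) \<le> R \<and> 0 < t \<and> t < T})
                   \<in> o(\<lambda>R. R powr \<beta>)"
  shows "(\<sigma> = 0 \<and> \<beta> = \<gamma>star \<longrightarrow>
            (\<forall>x. \<forall>t\<in>{0<..<T}. u x t \<le> Sup (range h) + t * (SUP s\<in>{0<..<T}. \<bar>chi s\<bar>)))
       \<and> (0 < \<sigma> \<and> \<sigma> \<le> \<gamma> / 2 \<and> \<beta> = \<gamma>star \<longrightarrow>
            (\<forall>x. \<forall>t\<in>{0<..<T}. u x t \<le> Sup (range h)))
       \<and> (\<sigma> > \<gamma> / 2 \<and> \<beta> = \<sigma>star \<longrightarrow>
            (\<forall>x. \<forall>t\<in>{0<..<T}. u x t \<le> Sup (range h)))"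
proof -
  have k1: "0 < k1" using k_gt1 by simp
  have bddH: "bdd_above {H e (lam *\<^sub>R tensor e e + mat 1) | lam (e::real^'n). norm e = 1}" using HC unfolding cond_H_def by (elim conjE) assumption
  then obtain \<Lambda>0 where \<Lambda>0: "\<And>y. y \<in> {H e (lam *\<^sub>R tensor e e + mat 1) | lam e. norm e = 1} \<Longrightarrow> y \<le> \<Lambda>0"
    unfolding bdd_above_def by blast
  define \<Lambda> where "\<Lambda> = max \<Lambda>0 0"
  have \<Lambda>: "0 \<le> \<Lambda>" by (simp add: \<Lambda>_def)
  have Lam: "\<And>lam e. norm e = 1 \<Longrightarrow> H e (lam *\<^sub>R tensor e e + mat 1) \<le> \<Lambda>"
  proof -
    fix lam and e :: "real^'n" assume "norm e = 1"
    hence "H e (lam *\<^sub>R tensor e e + mat 1) \<le> \<Lambda>0" by (intro \<Lambda>0) blast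
    thus "H e (lam *\<^sub>R tensor e e + mat 1) \<le> \<Lambda>" by (simp add: \<Lambda>_def)
  qed
  define C where "C = (SUP s\<in>{0<..<T}. \<bar>chi s\<bar>)"
  have bddchi: "bdd_above ((\<lambda>s. \<bar>chi s\<bar>) ` {0<..<T})"
  proof -
    obtain B where "\<forall>y\<in>chi ` {0<..<T}. norm y \<le> B" using chi_bdd unfolding bounded_iff by blast
    thus ?thesis unfolding bdd_above_def by auto
  qed
  have chiB: "\<forall>t\<in>{0<..<T}. \<bar>chi t\<bar> \<le> C" unfolding C_def using bddchi by (auto intro: cSUP_upper)
  have C0: "0 \<le> C" using chiB[rule_format, of "T/2"] T by simp
  define M where "M = Sup (range h)"
  have u0: "\<forall>x. u x 0 \<le> M"
  proof
    fix x have "h x \<le> M" unfolding M_def using h_bdd by (intro cSup_upper) auto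
    thus "u x 0 \<le> M" using u_init[rule_format, of x] by linarith
  qed
  note MC = main_cmp[where \<Lambda>=\<Lambda> and C=C and M=M, OF HC k1 T Lam chiB u_usc u_sub u0 growth_fin growth]
  have posc: "u x t \<le> M"
    if s1: "1 < s" and \<sigma>s: "0 < \<sigma>" "\<sigma> \<le> s" and sb: "s*(\<beta>-1) \<le> \<beta>" and kb: "k1*\<beta> \<le> k1+2"
      and \<beta>1: "1 \<le> \<beta>" and tt: "t \<in> {0<..<T}" for s x t
  proof (rule field_le_epsilon)
    fix e :: real assume e: "0 < e"
    define \<epsilon> where "\<epsilon> = e/4"
    have \<epsilon>: "0 < \<epsilon>" using e by (simp add: \<epsilon>_def)
    have t: "0 < t" "t < T" using tt by auto
    define a where "a = \<epsilon>/T"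
    have a: "0 < a" using \<epsilon> T by (simp add: a_def)
    define A where "A = a/(2*(C+1))"
    have A: "0 < A" using a C0 by (simp add: A_def)
    have "C * A = a * (C/(2*(C+1)))" using C0 by (simp add: A_def field_simps)
    also have "\<dots> < a * 1" using a C0 by (intro mult_strict_left_mono) (auto simp: field_simps)
    finally have CA: "C * A < a" by simp
    obtain W1 where W1: "0 < W1" "\<And>w. 0 < w \<and> w \<le> W1 \<Longrightarrow> (\<Lambda> * \<beta> powr (k1+1)) * w powr k1 \<le> 1/3"
      using small_W[OF k1, of "\<Lambda> * \<beta> powr (k1+1)"] \<Lambda> by auto
    obtain W2 where W2: "0 < W2" "\<And>w. 0 < w \<and> w \<le> W2 \<Longrightarrow> (C * A powr (1 - s/\<sigma>) * \<beta> powr s) * w powr (s-1) \<le> 1/3"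
      using small_W[of "s-1" "C * A powr (1 - s/\<sigma>) * \<beta> powr s"] s1 C0 by auto
    define \<delta> where "\<delta> = min (min W1 W2 / exp T) (\<epsilon> / (exp t * SS z x powr (\<beta>/2)))"
    have \<delta>: "0 < \<delta>" using W1 W2 \<epsilon> SS_pos[of z x] by (simp add: \<delta>_def)
    have "\<delta> \<le> min W1 W2 / exp T" by (simp add: \<delta>_def)
    hence \<delta>W: "\<delta> * exp T \<le> min W1 W2" by (simp add: field_simps)
    have \<delta>t: "\<delta> * exp t * SS z x powr (\<beta>/2) \<le> \<epsilon>"
    proof -
      have "\<delta> \<le> \<epsilon> / (exp t * SS z x powr (\<beta>/2))" by (simp add: \<delta>_def)
      thus ?thesis using SS_pos[of z x] by (simp add: field_simps)
    qed
    define \<eta> where "\<eta> = \<epsilon> * (T - t)"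
    have \<eta>: "0 < \<eta>" using \<epsilon> t by (simp add: \<eta>_def)
    have Key: "\<Lambda> * (((w*\<beta>*S powr (\<beta>/2-1)) * r) powr k1 * (w*\<beta>*S powr (\<beta>/2-1)))
        + C * pw ((w*\<beta>*S powr (\<beta>/2-1)) * r) \<sigma> < a + w * S powr (\<beta>/2)"
      if w: "0 < w" "w \<le> \<delta> * exp T" and S: "1 \<le> S" and r: "0 \<le> r" "r^2 \<le> S" for w S r
    proof -
      have wS: "0 < w * S powr (\<beta>/2)" using w S by simp
      have "\<Lambda> * (((w*\<beta>*S powr (\<beta>/2-1)) * r) powr k1 * (w*\<beta>*S powr (\<beta>/2-1)))
          \<le> \<Lambda> * ((\<beta> powr (k1+1) * w powr k1) * (w * S powr (\<beta>/2)))"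
        using Hterm_bound[OF w(1) S r \<beta>1 _ kb] k1 \<Lambda> by (intro mult_left_mono) auto
      also have "\<dots> = ((\<Lambda> * \<beta> powr (k1+1)) * w powr k1) * (w * S powr (\<beta>/2))" by (simp add: mult_ac)
      also have "\<dots> \<le> (1/3) * (w * S powr (\<beta>/2))"
        using W1(2)[of w] w \<delta>W wS by (intro mult_right_mono) auto
      finally have h1: "\<Lambda> * (((w*\<beta>*S powr (\<beta>/2-1)) * r) powr k1 * (w*\<beta>*S powr (\<beta>/2-1)))
          \<le> (1/3) * (w * S powr (\<beta>/2))" .
      have "C * pw ((w*\<beta>*S powr (\<beta>/2-1)) * r) \<sigma>
         \<le> C * A + (C * A powr (1 - s/\<sigma>) * \<beta> powr s * w powr (s-1)) * (w * S powr (\<beta>/2))"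
        by (rule chi_bound[OF w(1) S r \<beta>1 \<sigma>s sb A C0])
      also have "\<dots> \<le> C * A + (1/3) * (w * S powr (\<beta>/2))"
        using W2(2)[of w] w \<delta>W wS by (intro add_left_mono mult_right_mono) auto
      finally show ?thesis using h1 CA wS by linarith
    qed
    have "u x t \<le> M + \<epsilon> + a*t + \<delta>*exp t*SS z x powr (\<beta>/2) + \<eta>/(T-t)"
      by (rule MC[OF _ \<beta>1 \<epsilon> \<eta> \<delta> less_imp_le[OF a] Key tt]) simp
    moreover have "a*t \<le> \<epsilon>" using t \<epsilon> T by (simp add: a_def field_simps)
    moreover have "\<eta>/(T-t) = \<epsilon>" using t by (simp add: \<eta>_def)
    ultimately show "u x t \<le> M + e" using \<delta>t by (simp add: \<epsilon>_def)
  qed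
  have zeroc: "u x t \<le> M + t * C"
    if \<sigma>0: "\<sigma> = 0" and kb: "k1*\<beta> \<le> k1+2" and \<beta>1: "1 \<le> \<beta>" and tt: "t \<in> {0<..<T}" for x t
  proof (rule field_le_epsilon)
    fix e :: real assume e: "0 < e"
    define \<epsilon> where "\<epsilon> = e/4"
    have \<epsilon>: "0 < \<epsilon>" using e by (simp add: \<epsilon>_def)
    have t: "0 < t" "t < T" using tt by auto
    define a where "a = C + \<epsilon>/T"
    have a: "0 \<le> a" "C < a" using \<epsilon> T C0 by (auto simp: a_def)
    obtain W1 where W1: "0 < W1" "\<And>w. 0 < w \<and> w \<le> W1 \<Longrightarrow> (\<Lambda> * \<beta> powr (k1+1)) * w powr k1 \<le> 1/3"
      using small_W[OF k1, of "\<Lambda> * \<beta> powr (k1+1)"] \<Lambda> by auto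
    define \<delta> where "\<delta> = min (W1 / exp T) (\<epsilon> / (exp t * SS z x powr (\<beta>/2)))"
    have \<delta>: "0 < \<delta>" using W1 \<epsilon> SS_pos[of z x] by (simp add: \<delta>_def)
    have "\<delta> \<le> W1 / exp T" by (simp add: \<delta>_def)
    hence \<delta>W: "\<delta> * exp T \<le> W1" by (simp add: field_simps)
    have \<delta>t: "\<delta> * exp t * SS z x powr (\<beta>/2) \<le> \<epsilon>"
    proof -
      have "\<delta> \<le> \<epsilon> / (exp t * SS z x powr (\<beta>/2))" by (simp add: \<delta>_def)
      thus ?thesis using SS_pos[of z x] by (simp add: field_simps)
    qed
    define \<eta> where "\<eta> = \<epsilon> * (T - t)"
    have \<eta>: "0 < \<eta>" using \<epsilon> t by (simp add: \<eta>_def)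
    have Key: "\<Lambda> * (((w*\<beta>*S powr (\<beta>/2-1)) * r) powr k1 * (w*\<beta>*S powr (\<beta>/2-1)))
        + C * pw ((w*\<beta>*S powr (\<beta>/2-1)) * r) \<sigma> < a + w * S powr (\<beta>/2)"
      if w: "0 < w" "w \<le> \<delta> * exp T" and S: "1 \<le> S" and r: "0 \<le> r" "r^2 \<le> S" for w S r
    proof -
      have wS: "0 < w * S powr (\<beta>/2)" using w S by simp
      have "\<Lambda> * (((w*\<beta>*S powr (\<beta>/2-1)) * r) powr k1 * (w*\<beta>*S powr (\<beta>/2-1)))
          \<le> \<Lambda> * ((\<beta> powr (k1+1) * w powr k1) * (w * S powr (\<beta>/2)))"
        using Hterm_bound[OF w(1) S r \<beta>1 _ kb] k1 \<Lambda> by (intro mult_left_mono) auto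
      also have "\<dots> = ((\<Lambda> * \<beta> powr (k1+1)) * w powr k1) * (w * S powr (\<beta>/2))" by (simp add: mult_ac)
      also have "\<dots> \<le> (1/3) * (w * S powr (\<beta>/2))"
        using W1(2)[of w] w \<delta>W wS by (intro mult_right_mono) auto
      finally have h1: "\<Lambda> * (((w*\<beta>*S powr (\<beta>/2-1)) * r) powr k1 * (w*\<beta>*S powr (\<beta>/2-1)))
          \<le> (1/3) * (w * S powr (\<beta>/2))" .
      have "C * pw ((w*\<beta>*S powr (\<beta>/2-1)) * r) \<sigma> = C" using \<sigma>0 by (simp add: pw_def)
      thus ?thesis using h1 a wS by linarith
    qed
    have "u x t \<le> M + \<epsilon> + a*t + \<delta>*exp t*SS z x powr (\<beta>/2) + \<eta>/(T-t)"
      by (rule MC[OF _ \<beta>1 \<epsilon> \<eta> \<delta> a(1) Key tt]) simp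
    moreover have "a*t \<le> t * C + \<epsilon>" using t \<epsilon> T by (simp add: a_def field_simps)
    moreover have "\<eta>/(T-t) = \<epsilon>" using t by (simp add: \<eta>_def)
    ultimately show "u x t \<le> M + t * C + e" using \<delta>t by (simp add: \<epsilon>_def)
  qed
  have g: "\<gamma> = k1 + 2" by (simp add: \<gamma>_def)
  show ?thesis
  proof (intro conjI impI)
    assume H1: "\<sigma> = 0 \<and> \<beta> = \<gamma>star"
    have \<beta>: "\<beta> = (k1+2)/k1" using H1 g by (simp add: \<gamma>star_def)
    have kb: "k1*\<beta> \<le> k1+2" using k1 by (simp add: \<beta>)
    have \<beta>1: "1 \<le> \<beta>" using k1 by (simp add: \<beta> field_simps)
    show "\<forall>x. \<forall>t\<in>{0<..<T}. u x t \<le> Sup (range h) + t * (SUP s\<in>{0<..<T}. \<bar>chi s\<bar>)"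
      using zeroc[OF _ kb \<beta>1] H1 by (simp add: M_def C_def)
  next
    assume H2: "0 < \<sigma> \<and> \<sigma> \<le> \<gamma> / 2 \<and> \<beta> = \<gamma>star"
    have \<beta>: "\<beta> = (k1+2)/k1" using H2 g by (simp add: \<gamma>star_def)
    have kb: "k1*\<beta> \<le> k1+2" using k1 by (simp add: \<beta>)
    have \<beta>1: "1 \<le> \<beta>" using k1 by (simp add: \<beta> field_simps)
    have s1: "1 < (k1+2)/2" using k1 by simp
    have sb: "(k1+2)/2*(\<beta>-1) \<le> \<beta>" using k1 by (simp add: \<beta> field_simps)
    have \<sigma>s: "0 < \<sigma>" "\<sigma> \<le> (k1+2)/2" using H2 g by auto
    show "\<forall>x. \<forall>t\<in>{0<..<T}. u x t \<le> Sup (range h)"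
      using posc[OF s1 \<sigma>s sb kb \<beta>1] by (simp add: M_def)
  next
    assume H3: "\<gamma> / 2 < \<sigma> \<and> \<beta> = \<sigma>star"
    have \<sigma>g: "(k1+2)/2 < \<sigma>" using H3 g by simp
    have s1: "1 < \<sigma>" using \<sigma>g k1 by simp
    have \<beta>: "\<beta> = \<sigma>/(\<sigma>-1)" using H3 by (simp add: \<sigma>star_def)
    have kb: "k1*\<beta> \<le> k1+2" using s1 \<sigma>g by (simp add: \<beta> field_simps)
    have \<beta>1: "1 \<le> \<beta>" using s1 by (simp add: \<beta> field_simps)
    have sb: "\<sigma>*(\<beta>-1) \<le> \<beta>" using s1 by (simp add: \<beta> field_simps)
    have \<sigma>s: "0 < \<sigma>" "\<sigma> \<le> \<sigma>" using s1 by auto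
    show "\<forall>x. \<forall>t\<in>{0<..<T}. u x t \<le> Sup (range h)"
      using posc[OF s1 \<sigma>s sb kb \<beta>1] by (simp add: M_def)
  qed
qed


end
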